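(* Let $q\ge2$ and $n\ge1$. Every $2$-read $(n,5)_q$-code $\mathcal{C}\subseteq\Sigma_q^n$ satisfies $r(\mathcal{C})\ge\log_q((q-1)n+1)$.
   Context: $\Sigma_q=\{0,\dots,q-1\}$. For $\boldsymbol{x}\in\Sigma_q^n$, $x[i]$ is its $i$-th entry, with $x[i]=0$ for $i\notin[1,n]$; $\mathcal{R}(\boldsymbol{x})$ is the length-$(n+1)$ vector whose $i$-th entry is the multiset $\{\{x[i-1],x[i]\}\}$. $\mathcal{C}\subseteq\Sigma_q^n$ is a $2$-read $(n,d)_q$-code if $d_H(\mathcal{R}(\boldsymbol{x}),\mathcal{R}(\boldsymbol{y}))\ge d$ for all distinct $\boldsymbol{x},\boldsymbol{y}\in\mathcal{C}$ ($d_H$ = Hamming distance). Redundancy: $r(\mathcal{C})=n-\log_q|\mathcal{C}|$. *)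

theory Defs
  imports Complex_Main "HOL-Library.Multiset"
begin

text \<open>Words over Sigma_q = {0,...,q-1} of length n are lists of naturals.
  The entry x[i] (1-based), with x[i] = 0 for i outside [1,n].\<close>
definition entry :: "nat list \<Rightarrow> nat \<Rightarrow> nat" where
  "entry x i = (if 1 \<le> i \<and> i \<le> length x then x ! (i - 1) else 0)"

definition words :: "nat \<Rightarrow> nat \<Rightarrow> nat list set" where
  "words q n = {x. length x = n \<and> set x \<subseteq> {..<q}}"

definition read2 :: "nat list \<Rightarrow> nat multiset list" where
  "read2 x = map (\<lambda>i. {#entry x (i - 1), entry x i#}) [1..<length x + 2]"

definition hamming :: "'a list \<Rightarrow> 'a list \<Rightarrow> nat" where
  "hamming a b = card {i. i < length a \<and> a ! i \<noteq> b ! i}"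

definition two_read_code :: "nat \<Rightarrow> nat \<Rightarrow> nat \<Rightarrow> nat list set \<Rightarrow> bool" where
  "two_read_code q n d C \<longleftrightarrow> C \<subseteq> words q n \<and>
     (\<forall>x\<in>C. \<forall>y\<in>C. x \<noteq> y \<longrightarrow> hamming (read2 x) (read2 y) \<ge> d)"

definition redundancy :: "nat \<Rightarrow> nat \<Rightarrow> nat list set \<Rightarrow> real" where
  "redundancy q n C = real n - log (real q) (real (card C))"

end

theory Submission
  imports Defs
begin

lemma entry_diff:
  assumes "entry x j \<noteq> entry y j" "length x = length y"
  shows "1 \<le> j \<and> j \<le> length x \<and> x ! (j - 1) \<noteq> y ! (j - 1)"
  using assms unfolding entry_def by (auto split: if_splits)

lemma read2_nth:
  assumes "i < length x + 1"
  shows "read2 x ! i = {#entry x i, entry x (Suc i)#}"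
proof -
  have l: "length [1..<length x + 2] = length x + 1" by (simp only: length_upt)
  have "[1..<length x + 2] ! i = 1 + i" using assms by (subst nth_upt) auto
  then show ?thesis unfolding read2_def using assms
    by (simp only: nth_map[of i, OF assms[folded l]]) simp
qed

lemma length_read2: "length (read2 x) = length x + 1"
  unfolding read2_def by (simp only: length_map length_upt)

lemma read_le:
  assumes len: "length x = length y"
  shows "hamming (read2 x) (read2 y) \<le> 2 * hamming x y"
proof -
  define D where "D = {i. i < length x \<and> x ! i \<noteq> y ! i}"
  have fD: "finite D" unfolding D_def by auto
  have sub: "{i. i < length (read2 x) \<and> read2 x ! i \<noteq> read2 y ! i} \<subseteq> D \<union> Suc ` D"
  proof
    fix i assume "i \<in> {i. i < length (read2 x) \<and> read2 x ! i \<noteq> read2 y ! i}"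
    then have i: "i < length x + 1" and ne: "read2 x ! i \<noteq> read2 y ! i"
      by (auto simp: length_read2)
    have i2: "i < length y + 1" using i len by simp
    from ne have "entry x i \<noteq> entry y i \<or> entry x (Suc i) \<noteq> entry y (Suc i)"
      using read2_nth[OF i] read2_nth[OF i2] by auto
    then show "i \<in> D \<union> Suc ` D"
    proof
      assume "entry x i \<noteq> entry y i"
      from entry_diff[OF this len] have "i - 1 \<in> D" "i \<ge> 1" unfolding D_def by auto
      then have "i = Suc (i - 1)" "i - 1 \<in> D" by auto
      then show ?thesis by (metis UnI2 image_eqI)
    next
      assume "entry x (Suc i) \<noteq> entry y (Suc i)"
      from entry_diff[OF this len] show ?thesis unfolding D_def by auto
    qed
  qed
  have "hamming (read2 x) (read2 y) \<le> card (D \<union> Suc ` D)"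
    unfolding hamming_def using sub fD by (intro card_mono) auto
  also have "\<dots> \<le> card D + card (Suc ` D)" by (rule card_Un_le)
  also have "\<dots> \<le> 2 * card D" using card_image_le[OF fD, of Suc] by simp
  finally show ?thesis unfolding hamming_def D_def by simp
qed

definition S :: "nat \<Rightarrow> nat list \<Rightarrow> (nat \<times> nat) set" where
  "S q x = Sigma {..<length x} (\<lambda>i. {..<q} - {x ! i})"

definition ball :: "nat \<Rightarrow> nat list \<Rightarrow> nat list set" where
  "ball q x = insert x ((\<lambda>(i,a). x[i := a]) ` S q x)"

lemma card_S:
  assumes "x \<in> words q n"
  shows "card (S q x) = n * (q - 1)"
proof -
  have "card (S q x) = (\<Sum>i<length x. card ({..<q} - {x ! i}))"
    unfolding S_def by (simp add: card_SigmaI)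
  also have "\<dots> = (\<Sum>i<length x. q - 1)"
  proof (rule sum.cong)
    fix i assume "i \<in> {..<length x}"
    then have "x ! i < q" using assms unfolding words_def by (auto dest: nth_mem)
    then show "card ({..<q} - {x ! i}) = q - 1" by simp
  qed simp
  finally show ?thesis using assms unfolding words_def by simp
qed

lemma card_ball:
  assumes "x \<in> words q n"
  shows "card (ball q x) = (q - 1) * n + 1"
proof -
  define f where "f = (\<lambda>p::nat \<times> nat. x[fst p := snd p])"
  have bd: "ball q x = insert x (f ` S q x)"
    unfolding ball_def f_def by (simp add: case_prod_beta')
  have inj: "inj_on f (S q x)"
  proof (rule inj_onI)
    fix u v assume u: "u \<in> S q x" and v: "v \<in> S q x" and e0: "f u = f v"
    obtain i a where ui: "u = (i, a)" by (cases u)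
    obtain j b where vj: "v = (j, b)" by (cases v)
    have e: "x[i := a] = x[j := b]" using e0 unfolding f_def ui vj by simp
    have h: "i < length x" "j < length x" "a \<noteq> x ! i" "b \<noteq> x ! j"
      using u v unfolding S_def ui vj by auto
    have "i = j"
    proof (rule ccontr)
      assume "i \<noteq> j"
      then have "x[j := b] ! i = x ! i" using h by simp
      then have "x[i := a] ! i = x ! i" using e by (simp only:)
      moreover have "x[i := a] ! i = a" using h by simp
      ultimately show False using h by simp
    qed
    have "a = x[i := a] ! i" using h by simp
    also have "\<dots> = x[j := b] ! j" using e \<open>i = j\<close> by (simp only:)
    also have "\<dots> = b" using h by simp
    finally have "a = b" .
    then show "u = v" using ui vj \<open>i = j\<close> by (simp only:)
  qed
  have nx: "x \<notin> f ` S q x"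
  proof
    assume "x \<in> f ` S q x"
    then obtain u where u: "u \<in> S q x" "x = f u" by auto
    obtain i a where ui: "u = (i, a)" by (cases u)
    have h: "i < length x" "a \<noteq> x ! i" using u unfolding S_def ui by auto
    have "x = x[i := a]" using u unfolding f_def ui by simp
    then have "x ! i = x[i := a] ! i" by simp
    also have "\<dots> = a" using h(1) by simp
    finally show False using h(2) by simp
  qed
  have fS: "finite (S q x)" unfolding S_def by auto
  have "card (ball q x) = card (f ` S q x) + 1"
    unfolding bd using nx fS by (simp add: card_insert_disjoint)
  also have "card (f ` S q x) = card (S q x)" by (rule card_image[OF inj])
  finally show ?thesis using card_S[OF assms] by simp
qed

lemma ball_words:
  assumes "x \<in> words q n"
  shows "ball q x \<subseteq> words q n"
  using assms unfolding ball_def words_def S_def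
  by (auto dest!: set_update_subset_insert[THEN subsetD])

lemma finite_ball: "finite (ball q x)"
  unfolding ball_def S_def by simp

lemma ball_diff:
  assumes "z \<in> ball q x"
  shows "\<exists>i. \<forall>k. k < length z \<and> z ! k \<noteq> x ! k \<longrightarrow> k = i"
proof -
  from assms consider "z = x" | a b where "z = x[a := b]" unfolding ball_def by auto
  then show ?thesis
  proof cases
    case 1 then show ?thesis by auto
  next
    case (2 a b)
    then have "\<forall>k. k < length z \<and> z ! k \<noteq> x ! k \<longrightarrow> k = a"
      by (metis nth_list_update_neq)
    then show ?thesis by blast
  qed
qed

lemma ball_len:
  assumes "z \<in> ball q x"
  shows "length z = length x"
  using assms unfolding ball_def by auto

lemma ball_disj:
  assumes "z \<in> ball q x" "z \<in> ball q y"
  shows "hamming x y \<le> 2"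
proof -
  obtain i where i: "\<forall>k. k < length z \<and> z ! k \<noteq> x ! k \<longrightarrow> k = i" using ball_diff[OF assms(1)] by blast
  obtain j where j: "\<forall>k. k < length z \<and> z ! k \<noteq> y ! k \<longrightarrow> k = j" using ball_diff[OF assms(2)] by blast
  have l: "length x = length z" using ball_len[OF assms(1)] by simp
  have "{k. k < length x \<and> x ! k \<noteq> y ! k} \<subseteq> {i, j}" using i j l by auto
  then have "hamming x y \<le> card {i, j}" unfolding hamming_def by (intro card_mono) auto
  also have "\<dots> \<le> 2" by (simp add: card_insert_le_m1)
  finally show ?thesis .
qed

lemma card_words: "card (words q n) = q ^ n"
proof -
  have "words q n = {xs. set xs \<subseteq> {..<q} \<and> length xs = n}" unfolding words_def by auto
  then show ?thesis by (simp add: card_lists_length_eq)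
qed

lemma finite_words: "finite (words q n)"
proof -
  have "words q n = {xs. set xs \<subseteq> {..<q} \<and> length xs = n}" unfolding words_def by auto
  then show ?thesis by (simp add: finite_lists_length_eq)
qed

theorem theorem11:
  fixes q n :: nat and C :: "nat list set"
  assumes "q \<ge> 2" and "n \<ge> 1"
    and "two_read_code q n 5 C"
  shows "redundancy q n C \<ge> log (real q) (real ((q - 1) * n + 1))"
proof -
  define M where "M = (q - 1) * n + 1"
  have CW: "C \<subseteq> words q n" and dist: "\<And>x y. x \<in> C \<Longrightarrow> y \<in> C \<Longrightarrow> x \<noteq> y \<Longrightarrow> hamming (read2 x) (read2 y) \<ge> 5"
    using assms(3) unfolding two_read_code_def by auto
  have fC: "finite C" using CW finite_words finite_subset by blast
  have disj: "ball q x \<inter> ball q y = {}" if "x \<in> C" "y \<in> C" "x \<noteq> y" for x y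
  proof (rule ccontr)
    assume "ball q x \<inter> ball q y \<noteq> {}"
    then obtain z where "z \<in> ball q x" "z \<in> ball q y" by auto
    then have "hamming x y \<le> 2" by (rule ball_disj)
    moreover have "length x = length y" using that CW unfolding words_def by auto
    then have "hamming (read2 x) (read2 y) \<le> 2 * hamming x y" by (rule read_le)
    ultimately have "hamming (read2 x) (read2 y) \<le> 4" by linarith
    then show False using dist[OF that] by simp
  qed
  have "card (\<Union>x\<in>C. ball q x) = (\<Sum>x\<in>C. card (ball q x))"
    using fC disj by (intro card_UN_disjoint) (auto simp: finite_ball)
  also have "\<dots> = (\<Sum>x\<in>C. M)" using CW card_ball unfolding M_def by (intro sum.cong) auto
  finally have cU: "card (\<Union>x\<in>C. ball q x) = card C * M" by simp
  have "(\<Union>x\<in>C. ball q x) \<subseteq> words q n" using CW ball_words by blast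
  then have "card (\<Union>x\<in>C. ball q x) \<le> card (words q n)" by (intro card_mono finite_words)
  then have "card C * M \<le> q ^ n" using cU card_words by simp
  then have "real (card C * M) \<le> real (q ^ n)" by (rule of_nat_mono)
  then have key: "real (card C) * real M \<le> real q ^ n" by simp
  have w0: "replicate n 0 \<in> words q n" using assms(1) unfolding words_def by auto
  have "card (ball q (replicate n 0)) \<le> card (words q n)"
    using card_mono[OF finite_words ball_words[OF w0]] .
  then have "M \<le> q ^ n" using card_ball[OF w0] card_words unfolding M_def by simp
  then have "real M \<le> real (q ^ n)" by (rule of_nat_mono)
  then have M: "real M \<le> real q ^ n" by simp
  have q1: "real q > 1" using assms(1) by simp
  have "M > 0" unfolding M_def by simp
  then have Mpos: "real M > 0" by simp
  have logn: "log (real q) (real q ^ n) = real n" using q1 by (simp add: log_nat_power)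
  show ?thesis
  proof (cases "card C = 0")
    case True
    have "log (real q) (real M) \<le> log (real q) (real q ^ n)"
      using M q1 Mpos by (subst log_le_cancel_iff) auto
    then show ?thesis unfolding redundancy_def M_def[symmetric] using True logn by (simp add: log_def)
  next
    case False
    then have cp: "real (card C) > 0" by simp
    have "log (real q) (real (card C) * real M) \<le> log (real q) (real q ^ n)"
      using key q1 cp Mpos by (subst log_le_cancel_iff) auto
    then have "log (real q) (real (card C)) + log (real q) (real M) \<le> real n"
      using logn cp Mpos q1 by (simp add: log_mult)
    then show ?thesis unfolding redundancy_def M_def by simp
  qed
qed

end
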